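(* Let $(A_C,\mathcal R_A)$ be an autocatalytic core of a CRN and let $\overline{\mathbb S}_C=(\mathbb S)_{A_C}^{\mathcal R_A}$ (a square invertible matrix). Then every column of $\overline{\mathbb S}_C^{-1}$ is semi-positive, i.e. $\overline{\mathbb S}_C^{-1}$ has only nonnegative entries and no zero column.
   Context: A chemical reaction network (CRN) consists of a finite species set $\mathcal S$ and a finite set $\mathcal R$ of reactions; each reaction $r$ is written $r^-\to r^+$ with input complex $r^-\in\mathbb Z_{\ge0}^{\mathcal S}$ and output complex $r^+\in\mathbb Z_{\ge0}^{\mathcal S}$. The input and output matrices $\mathbb S^-,\mathbb S^+$ are the $\mathcal S\times\mathcal R$ matrices whose column indexed by $r$ is $r^-$, resp. $r^+$; the stoichiometric matrix is $\mathbb S=\mathbb S^+-\mathbb S^-$. For a matrix $\mathbb A$ with rows indexed by $\mathcal S$ and columns by $\mathcal R$ and subsets $M\subseteq\mathcal S$, $N\subseteq\mathcal R$, $(\mathbb A)_M^N$ is the submatrix with rows in $M$ and columns in $N$. For a vector $\mathbf v$: $\mathbf v\gg\mathbf 0$ means all entries are $>0$; $\mathbf v>\mathbf 0$ (semi-positive) means all entries are $\ge0$ and $\mathbf v\ne\mathbf 0$. A motif is a pair $(\mathcal M,\mathcal R')$ with $\mathcal M\subseteq\mathcal S$, $\mathcal R'\subseteq\mathcal R$. It is exclusively autocatalytic if: (i) there is $\mathbf v\in\mathbb R^{\mathcal R'}$, $\mathbf v\gg\mathbf0$, with $(\mathbb S)_{\mathcal M}^{\mathcal R'}\mathbf v\gg\mathbf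 0$; (ii) every row of $(\mathbb S^-)_{\mathcal M}^{\mathcal R'}$ is semi-positive; (iii) every column of $(\mathbb S^-)_{\mathcal M}^{\mathcal R'}$ is semi-positive. An autocatalytic core is an exclusively autocatalytic motif $(A_C,\mathcal R_A)$ such that no motif $(\mathcal M',\mathcal R'')\neq(A_C,\mathcal R_A)$ with $\mathcal M'\subseteq A_C$ and $\mathcal R''\subseteq\mathcal R_A$ is exclusively autocatalytic. *)

theory Defs
  imports Complex_Main
begin

text \<open>A CRN is given by a finite species set Spc, a finite reaction set Rxn, and the
input / output matrices Sin, Sout (column r is the input / output complex of r),
with nonnegative integer entries.\<close>

definition stoich :: "('s \<Rightarrow> 'r \<Rightarrow> nat) \<Rightarrow> ('s \<Rightarrow> 'r \<Rightarrow> nat) \<Rightarrow> 's \<Rightarrow> 'r \<Rightarrow> real" where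
  "stoich Sin Sout s r = real (Sout s r) - real (Sin s r)"

text \<open>Exclusively autocatalytic motif (M, R') of the CRN; M is required nonempty
(otherwise the empty motif would trivially qualify and no core could exist).\<close>

definition excl_autocatalytic ::
  "'s set \<Rightarrow> 'r set \<Rightarrow> ('s \<Rightarrow> 'r \<Rightarrow> nat) \<Rightarrow> ('s \<Rightarrow> 'r \<Rightarrow> nat) \<Rightarrow> 's set \<Rightarrow> 'r set \<Rightarrow> bool" where
  "excl_autocatalytic Spc Rxn Sin Sout M R' \<longleftrightarrow>
     M \<subseteq> Spc \<and> R' \<subseteq> Rxn \<and> M \<noteq> {} \<and>
     (\<exists>v :: 'r \<Rightarrow> real. (\<forall>r\<in>R'. v r > 0) \<and>
        (\<forall>s\<in>M. (\<Sum>r\<in>R'. stoich Sin Sout s r * v r) > 0)) \<and>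
     (\<forall>s\<in>M. \<exists>r\<in>R'. Sin s r > 0) \<and>
     (\<forall>r\<in>R'. \<exists>s\<in>M. Sin s r > 0)"

definition autocatalytic_core ::
  "'s set \<Rightarrow> 'r set \<Rightarrow> ('s \<Rightarrow> 'r \<Rightarrow> nat) \<Rightarrow> ('s \<Rightarrow> 'r \<Rightarrow> nat) \<Rightarrow> 's set \<Rightarrow> 'r set \<Rightarrow> bool" where
  "autocatalytic_core Spc Rxn Sin Sout AC RA \<longleftrightarrow>
     excl_autocatalytic Spc Rxn Sin Sout AC RA \<and>
     (\<forall>M' R''. M' \<subseteq> AC \<longrightarrow> R'' \<subseteq> RA \<longrightarrow> (M', R'') \<noteq> (AC, RA) \<longrightarrow>
        \<not> excl_autocatalytic Spc Rxn Sin Sout M' R'')"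

definition is_inverse_on ::
  "'s set \<Rightarrow> 'r set \<Rightarrow> ('s \<Rightarrow> 'r \<Rightarrow> real) \<Rightarrow> ('r \<Rightarrow> 's \<Rightarrow> real) \<Rightarrow> bool" where
  "is_inverse_on M R A B \<longleftrightarrow>
     (\<forall>s\<in>M. \<forall>s'\<in>M. (\<Sum>r\<in>R. A s r * B r s') = (if s = s' then 1 else 0)) \<and>
     (\<forall>r\<in>R. \<forall>r'\<in>R. (\<Sum>s\<in>M. B r s * A s r') = (if r = r' then 1 else 0))"

end

theory Submission
  imports Defs "Jordan_Normal_Form.Determinant"
begin


lemma core_motif:
  assumes "autocatalytic_core Spc Rxn Sin Sout AC RA"
  shows "excl_autocatalytic Spc Rxn Sin Sout AC RA"
  using assms unfolding autocatalytic_core_def by blast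

lemma sub_motif:
  assumes fin: "finite Rxn" and core: "autocatalytic_core Spc Rxn Sin Sout AC RA"
    and wnn: "\<forall>r\<in>RA. w r \<ge> (0::real)"
    and wpos: "\<forall>s\<in>AC. (\<Sum>r\<in>RA. stoich Sin Sout s r * w r) > 0"
  shows "\<forall>r\<in>RA. w r > 0"
proof -
  have ex: "excl_autocatalytic Spc Rxn Sin Sout AC RA" using core_motif[OF core] .
  hence RA: "RA \<subseteq> Rxn" and AC: "AC \<subseteq> Spc" "AC \<noteq> {}"
    and iii: "\<forall>r\<in>RA. \<exists>s\<in>AC. Sin s r > 0"
    unfolding excl_autocatalytic_def by auto
  have finR: "finite RA" using RA fin finite_subset by blast
  define R' where "R' = {r\<in>RA. w r > 0}"
  define M' where "M' = {s\<in>AC. \<exists>r\<in>R'. Sin s r > 0}"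
  have sumeq: "(\<Sum>r\<in>R'. stoich Sin Sout s r * w r) = (\<Sum>r\<in>RA. stoich Sin Sout s r * w r)" for s
    apply (rule sum.mono_neutral_left[OF finR])
    using wnn unfolding R'_def by force+
  obtain s0 where s0: "s0 \<in> AC" using AC by blast
  have "(\<Sum>r\<in>R'. stoich Sin Sout s0 r * w r) > 0" using sumeq wpos s0 by simp
  then have "R' \<noteq> {}" by auto
  then obtain r0 where "r0 \<in> R'" by blast
  then obtain s1 where "s1 \<in> AC" "Sin s1 r0 > 0" using iii unfolding R'_def by auto
  hence M'ne: "M' \<noteq> {}" using \<open>r0 \<in> R'\<close> unfolding M'_def by blast
  have "excl_autocatalytic Spc Rxn Sin Sout M' R'"
    unfolding excl_autocatalytic_def
  proof (intro conjI)
    show "M' \<subseteq> Spc" using AC unfolding M'_def by auto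
    show "R' \<subseteq> Rxn" using RA unfolding R'_def by auto
    show "M' \<noteq> {}" by (rule M'ne)
    show "\<exists>v. (\<forall>r\<in>R'. 0 < v r) \<and> (\<forall>s\<in>M'. 0 < (\<Sum>r\<in>R'. stoich Sin Sout s r * v r))"
      by (rule exI[of _ w]) (use sumeq wpos in \<open>auto simp: R'_def M'_def\<close>)
    show "\<forall>s\<in>M'. \<exists>r\<in>R'. 0 < Sin s r" unfolding M'_def by auto
    show "\<forall>r\<in>R'. \<exists>s\<in>M'. 0 < Sin s r" using iii unfolding M'_def R'_def by fastforce
  qed
  moreover have "M' \<subseteq> AC" "R' \<subseteq> RA" unfolding M'_def R'_def by auto
  ultimately have "(M', R') = (AC, RA)" using core unfolding autocatalytic_core_def by blast
  thus ?thesis unfolding R'_def by auto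
qed

lemma key_nonneg:
  assumes fin: "finite Rxn" and core: "autocatalytic_core Spc Rxn Sin Sout AC RA"
    and d: "\<forall>s\<in>AC. (\<Sum>r\<in>RA. stoich Sin Sout s r * d r) \<ge> 0"
  shows "\<forall>r\<in>RA. d r \<ge> (0::real)"
proof (rule ccontr)
  assume neg: "\<not> (\<forall>r\<in>RA. d r \<ge> 0)"
  have ex: "excl_autocatalytic Spc Rxn Sin Sout AC RA" using core_motif[OF core] .
  then obtain v where vpos: "\<forall>r\<in>RA. 0 < v r"
    and Sv: "\<forall>s\<in>AC. 0 < (\<Sum>r\<in>RA. stoich Sin Sout s r * v r)" and RA: "RA \<subseteq> Rxn"
    unfolding excl_autocatalytic_def by blast
  have finR: "finite RA" using RA fin finite_subset by blast
  define N where "N = {r\<in>RA. d r < 0}"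
  have finN: "finite N" "N \<noteq> {}" using finR neg unfolding N_def by auto
  define t where "t = Min ((\<lambda>r. v r / (- d r)) ` N)"
  have "t \<in> (\<lambda>r. v r / (- d r)) ` N" unfolding t_def using finN by (intro Min_in) auto
  then obtain rs where rs: "rs \<in> N" "t = v rs / (- d rs)" by blast
  have tle: "t \<le> v r / (- d r)" if "r \<in> N" for r
    unfolding t_def using finN that by auto
  have tpos: "t > 0" using rs vpos unfolding N_def by (auto simp: divide_pos_neg)
  define u where "u r = v r + t * d r" for r
  have unn: "\<forall>r\<in>RA. u r \<ge> 0"
  proof
    fix r assume r: "r \<in> RA"
    show "u r \<ge> 0"
    proof (cases "d r < 0")
      case True
      hence "r \<in> N" using r unfolding N_def by auto
      hence "t \<le> v r / (- d r)" by (rule tle)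
      moreover have c: "0 < - d r" using True by simp
      ultimately have "t * (- d r) \<le> v r" by (simp only: pos_le_divide_eq[OF c, symmetric])
      thus ?thesis unfolding u_def by simp
    next
      case False
      have a: "0 < v r" using vpos r by auto
      have b: "0 \<le> t * d r" using tpos False by simp
      show ?thesis unfolding u_def using a b by linarith
    qed
  qed
  have "\<forall>s\<in>AC. (\<Sum>r\<in>RA. stoich Sin Sout s r * u r) > 0"
  proof
    fix s assume s: "s \<in> AC"
    have "(\<Sum>r\<in>RA. stoich Sin Sout s r * u r) = (\<Sum>r\<in>RA. stoich Sin Sout s r * v r) + t * (\<Sum>r\<in>RA. stoich Sin Sout s r * d r)"
      unfolding u_def by (simp add: algebra_simps sum.distrib sum_distrib_left)
    thus "(\<Sum>r\<in>RA. stoich Sin Sout s r * u r) > 0" using Sv d s tpos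
      by (metis add_pos_nonneg mult_nonneg_nonneg less_imp_le)
  qed
  hence "\<forall>r\<in>RA. u r > 0" using sub_motif[OF fin core unn] by blast
  moreover have "u rs = 0" using rs unfolding u_def N_def by auto
  ultimately show False using rs unfolding N_def by auto
qed

lemma kernel_trivial:
  assumes fin: "finite Rxn" and core: "autocatalytic_core Spc Rxn Sin Sout AC RA"
    and d: "\<forall>s\<in>AC. (\<Sum>r\<in>RA. stoich Sin Sout s r * d r) = 0"
  shows "\<forall>r\<in>RA. d r = (0::real)"
proof -
  have "\<forall>r\<in>RA. d r \<ge> 0" using key_nonneg[OF fin core] d by simp
  moreover have "\<forall>r\<in>RA. - d r \<ge> 0"
    using key_nonneg[OF fin core, of "\<lambda>r. - d r"] d by (simp add: sum_negf)
  ultimately show ?thesis by force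
qed

lemma card_le:
  assumes fin: "finite Rxn" and core: "autocatalytic_core Spc Rxn Sin Sout AC RA"
  shows "card AC \<le> card RA"
proof -
  have ex: "excl_autocatalytic Spc Rxn Sin Sout AC RA" using core_motif[OF core] .
  then obtain v where vpos: "\<forall>r\<in>RA. 0 < v r"
    and Sv: "\<forall>s\<in>AC. 0 < (\<Sum>r\<in>RA. stoich Sin Sout s r * v r)" and RA: "RA \<subseteq> Rxn"
    and AC: "AC \<subseteq> Spc" and ii: "\<forall>s\<in>AC. \<exists>r\<in>RA. Sin s r > 0"
    and iii: "\<forall>r\<in>RA. \<exists>s\<in>AC. Sin s r > 0"
    unfolding excl_autocatalytic_def by blast
  have finR: "finite RA" using RA fin finite_subset by blast
  have cons: "\<exists>r\<in>RA. Sin s0 r > 0 \<and> (\<forall>s\<in>AC. s \<noteq> s0 \<longrightarrow> Sin s r = 0)" if s0: "s0 \<in> AC" for s0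
  proof (cases "AC - {s0} = {}")
    case True
    thus ?thesis using ii s0 by blast
  next
    case False
    have "\<not> excl_autocatalytic Spc Rxn Sin Sout (AC - {s0}) RA"
      using core s0 unfolding autocatalytic_core_def by blast
    hence "\<not> (\<forall>r\<in>RA. \<exists>s\<in>AC - {s0}. Sin s r > 0)"
      unfolding excl_autocatalytic_def using False AC RA vpos Sv ii by blast
    then obtain r where r: "r \<in> RA" "\<forall>s\<in>AC - {s0}. Sin s r = 0" by auto
    then obtain s where "s \<in> AC" "Sin s r > 0" using iii by blast
    hence "s = s0" using r by (cases "s = s0") auto
    thus ?thesis using r \<open>Sin s r > 0\<close> by blast
  qed
  define f where "f s = (SOME r. r\<in>RA \<and> Sin s r > 0 \<and> (\<forall>s'\<in>AC. s' \<noteq> s \<longrightarrow> Sin s' r = 0))" for s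
  have f: "f s \<in> RA \<and> Sin s (f s) > 0 \<and> (\<forall>s'\<in>AC. s' \<noteq> s \<longrightarrow> Sin s' (f s) = 0)" if "s \<in> AC" for s
    unfolding f_def using someI_ex[OF cons[OF that, unfolded Bex_def]] by blast
  have "inj_on f AC"
    by (rule inj_onI) (metis f gr_implies_not0)
  moreover have "f ` AC \<subseteq> RA" using f by auto
  ultimately show ?thesis using card_inj_on_le finR by blast
qed

lemma inverse_exists:
  fixes A :: "'s \<Rightarrow> 'r \<Rightarrow> real"
  assumes finM: "finite M" and finR: "finite R" and le: "card M \<le> card R"
    and inj: "\<And>d. \<forall>s\<in>M. (\<Sum>r\<in>R. A s r * d r) = 0 \<Longrightarrow> \<forall>r\<in>R. d r = 0"
  shows "card M = card R \<and> (\<exists>B. is_inverse_on M R A B)"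
proof -
  define m where "m = card R"
  define n where "n = card M"
  obtain fr where fr: "bij_betw fr {0..<m} R" using ex_bij_betw_nat_finite[OF finR] m_def by blast
  obtain fs where fs: "bij_betw fs {0..<n} M" using ex_bij_betw_nat_finite[OF finM] n_def by blast
  define gr where "gr = inv_into {0..<m} fr"
  define gs where "gs = inv_into {0..<n} fs"
  have gr: "gr r < m" "fr (gr r) = r" if "r \<in> R" for r
    using that fr unfolding gr_def
    by (auto simp: bij_betw_def inv_into_into f_inv_into_f)
  have gr2: "gr (fr j) = j" if "j < m" for j
    using that fr unfolding gr_def by (auto simp: bij_betw_def inv_into_f_f)
  have gs: "gs s < n" "fs (gs s) = s" if "s \<in> M" for s
    using that fs unfolding gs_def
    by (auto simp: bij_betw_def inv_into_into f_inv_into_f)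
  have gs2: "gs (fs j) = j" if "j < n" for j
    using that fs unfolding gs_def by (auto simp: bij_betw_def inv_into_f_f)
  have frR: "fr j \<in> R" if "j < m" for j using fr that by (auto simp: bij_betw_def)
  have fsM: "fs j \<in> M" if "j < n" for j using fs that by (auto simp: bij_betw_def)
  have reR: "(\<Sum>r\<in>R. h r) = (\<Sum>j<m. h (fr j))" for h :: "'r \<Rightarrow> real"
    using sum.reindex_bij_betw[OF fr, of h] by (simp add: atLeast0LessThan)
  have reM: "(\<Sum>s\<in>M. h s) = (\<Sum>j<n. h (fs j))" for h :: "'s \<Rightarrow> real"
    using sum.reindex_bij_betw[OF fs, of h] by (simp add: atLeast0LessThan)
  define Am where "Am = mat m m (\<lambda>(i,j). if i < n then A (fs i) (fr j) else 0)"
  have Am: "Am \<in> carrier_mat m m" unfolding Am_def by simp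
  have detne: "det Am \<noteq> 0"
  proof
    assume "det Am = 0"
    then obtain v where v: "v \<in> carrier_vec m" "v \<noteq> 0\<^sub>v m" "Am *\<^sub>v v = 0\<^sub>v m"
      using det_0_iff_vec_prod_zero_field[OF Am] by blast
    define d where "d r = v $ (gr r)" for r
    have "\<forall>s\<in>M. (\<Sum>r\<in>R. A s r * d r) = 0"
    proof
      fix s assume s: "s \<in> M"
      have i: "gs s < n" "fs (gs s) = s" using gs s by auto
      have "n \<le> m" using le unfolding m_def n_def .
      hence im: "gs s < m" using i by simp
      have "(\<Sum>r\<in>R. A s r * d r) = (\<Sum>j<m. A s (fr j) * v $ j)"
        unfolding reR d_def using gr2 by simp
      also have "\<dots> = (Am *\<^sub>v v) $ (gs s)"
        using im i v(1) unfolding Am_def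
        by (simp add: scalar_prod_def atLeast0LessThan)
      also have "\<dots> = 0" using v(3) im by simp
      finally show "(\<Sum>r\<in>R. A s r * d r) = 0" .
    qed
    hence "\<forall>r\<in>R. d r = 0" by (rule inj)
    hence "v = 0\<^sub>v m"
      using v(1) frR gr2 unfolding d_def by (intro eq_vecI) (auto, metis)
    thus False using v(2) by simp
  qed
  have nm: "n = m"
  proof (rule ccontr)
    assume "n \<noteq> m"
    hence nlt: "n < m" using le unfolding m_def n_def by simp
    have "Am = mat\<^sub>r m m (\<lambda>i. if i = m - 1 then 0\<^sub>v m else row Am i)"
      using nlt unfolding Am_def by (intro eq_matI) auto
    hence "det Am = 0" using det_row_0[of "m - 1" m "\<lambda>i. row Am i"] nlt Am by auto
    thus False using detne by simp
  qed
  have "Am \<in> Units (ring_mat TYPE(real) m ())" by (rule det_non_zero_imp_unit[OF Am detne])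
  then obtain B where B: "B \<in> carrier_mat m m" "B * Am = 1\<^sub>m m" "Am * B = 1\<^sub>m m"
    unfolding Units_def ring_mat_def by auto
  define Bf where "Bf r s = B $$ (gr r, gs s)" for r s
  have "is_inverse_on M R A Bf"
    unfolding is_inverse_on_def
  proof (intro conjI ballI)
    fix s s' assume s: "s \<in> M" and s': "s' \<in> M"
    have i: "gs s < m" "fs (gs s) = s" "gs s' < m" "fs (gs s') = s'" using gs s s' nm by auto
    have eq: "(gs s = gs s') = (s = s')" using i by metis
    have "(\<Sum>r\<in>R. A s r * Bf r s') = (\<Sum>j<m. Am $$ (gs s, j) * B $$ (j, gs s'))"
      unfolding reR Bf_def Am_def using gr2 i nm by simp
    also have "\<dots> = (Am * B) $$ (gs s, gs s')"
      using i B(1) Am by (simp add: scalar_prod_def atLeast0LessThan)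
    also have "\<dots> = (if s = s' then 1 else 0)"
      using B(3) i eq by simp
    finally show "(\<Sum>r\<in>R. A s r * Bf r s') = (if s = s' then 1 else 0)" .
  next
    fix r r' assume r: "r \<in> R" and r': "r' \<in> R"
    have i: "gr r < m" "fr (gr r) = r" "gr r' < m" "fr (gr r') = r'" using gr r r' by auto
    have eq: "(gr r = gr r') = (r = r')" using i by metis
    have "(\<Sum>s\<in>M. Bf r s * A s r') = (\<Sum>j<m. B $$ (gr r, j) * Am $$ (j, gr r'))"
      unfolding reM Bf_def Am_def using gs2 i nm by simp
    also have "\<dots> = (B * Am) $$ (gr r, gr r')"
      using i B(1) Am by (simp add: scalar_prod_def atLeast0LessThan)
    also have "\<dots> = (if r = r' then 1 else 0)"
      using B(2) i eq by simp
    finally show "(\<Sum>s\<in>M. Bf r s * A s r') = (if r = r' then 1 else 0)" .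
  qed
  thus ?thesis using nm unfolding m_def n_def by blast
qed


theorem mainTheorem6:
  fixes Spc :: "'s set" and Rxn :: "'r set"
    and Sin Sout :: "'s \<Rightarrow> 'r \<Rightarrow> nat"
    and AC :: "'s set" and RA :: "'r set"
  assumes "finite Spc" and "finite Rxn"
    and "autocatalytic_core Spc Rxn Sin Sout AC RA"
  shows "card AC = card RA \<and>
    (\<exists>B. is_inverse_on AC RA (stoich Sin Sout) B) \<and>
    (\<forall>B. is_inverse_on AC RA (stoich Sin Sout) B \<longrightarrow>
       (\<forall>s\<in>AC. (\<forall>r\<in>RA. B r s \<ge> 0) \<and> (\<exists>r\<in>RA. B r s \<noteq> 0)))"
proof -
  note fin = assms(2) and core = assms(3)
  have ex: "excl_autocatalytic Spc Rxn Sin Sout AC RA" using core_motif[OF core] .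
  hence RA: "RA \<subseteq> Rxn" and AC: "AC \<subseteq> Spc" unfolding excl_autocatalytic_def by auto
  have finR: "finite RA" using RA fin finite_subset by blast
  have finM: "finite AC" using AC assms(1) finite_subset by blast
  have part: "card AC = card RA \<and> (\<exists>B. is_inverse_on AC RA (stoich Sin Sout) B)"
    by (rule inverse_exists[OF finM finR card_le[OF fin core]])
       (rule kernel_trivial[OF fin core], blast)
  have nn: "(\<forall>s\<in>AC. (\<forall>r\<in>RA. B r s \<ge> 0) \<and> (\<exists>r\<in>RA. B r s \<noteq> 0))"
    if B: "is_inverse_on AC RA (stoich Sin Sout) B" for B
  proof
    fix s' assume s': "s' \<in> AC"
    have col: "\<forall>s\<in>AC. (\<Sum>r\<in>RA. stoich Sin Sout s r * B r s') = (if s = s' then 1 else 0)"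
      using B s' unfolding is_inverse_on_def by blast
    hence "\<forall>s\<in>AC. (\<Sum>r\<in>RA. stoich Sin Sout s r * B r s') \<ge> 0" by simp
    hence "\<forall>r\<in>RA. B r s' \<ge> 0" by (rule key_nonneg[OF fin core])
    moreover have "\<exists>r\<in>RA. B r s' \<noteq> 0"
    proof (rule ccontr)
      assume "\<not> (\<exists>r\<in>RA. B r s' \<noteq> 0)"
      hence "(\<Sum>r\<in>RA. stoich Sin Sout s' r * B r s') = 0" by simp
      thus False using col s' by simp
    qed
    ultimately show "(\<forall>r\<in>RA. B r s' \<ge> 0) \<and> (\<exists>r\<in>RA. B r s' \<noteq> 0)" by blast
  qed
  show ?thesis using part nn by blast
qed

end
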